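(* Let $N,T\in\mathbb{N}^*$, $\rho>0$, $\alpha\in\mathbb{R}$. Let $W$ be a symmetric $N\times N$ random matrix whose entries on and above the diagonal are i.i.d. $\mathcal{N}(0,\rho^2/N^{2\alpha})$. Let $B_{T,N}$ be its generalised matrix of moments of order $T$. For $l_1,l_2\in\{0,\ldots,T\}$: (i) if $l_1+l_2$ is odd then $B_{T,N}(l_1,l_2)=0$; (ii) if $l_1+l_2$ is even and $\frac{l_1+l_2}{2}+1\le N$, writing $s=l_1+l_2$, \[ \frac{\rho^{s}}{\frac s2+1}\binom{s}{s/2}\frac{N(N-1)\cdots(N-\frac s2)}{N^{\alpha s}}\le B_{T,N}(l_1,l_2)\le\frac{\rho^{s}}{\frac s2+1}\binom{s}{s/2}N^{s(\frac12-\alpha)+1}+\rho^{s}m_{s}\left(\frac s2\right)^{s}N^{s(\frac12-\alpha)}. \]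
   Context: $m_t:=\mathbb{E}X^t$ for a standard Gaussian $X$. Generalised matrix of moments: for $i\in[N]$, $\beta_{i,0}=1$, $\beta_{i,l}=\sum_{i_1,\ldots,i_l=1}^N W_{ii_1}W_{i_1i_2}\cdots W_{i_{l-1}i_l}$ for $l\ge1$, and $B_{T,N}(l_1,l_2)=\mathbb{E}\sum_{i=1}^N\beta_{i,l_1}\beta_{i,l_2}$, $0\le l_1,l_2\le T$. *)

theory Defs
  imports "HOL-Probability.Probability"
begin

definition gauss_moment :: "nat \<Rightarrow> real" where
  "gauss_moment t = integral\<^sup>L (density lborel std_normal_density) (\<lambda>x. x ^ t)"

definition upper_idx :: "nat \<Rightarrow> (nat \<times> nat) set" where
  "upper_idx N = {(i, j). i \<le> j \<and> j < N}"

text \<open>Joint law of the i.i.d. entries W_ij (i <= j), each N(0, rho^2 / N^(2 alpha)),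
  i.e. standard deviation rho / N^alpha.\<close>
definition entry_space :: "nat \<Rightarrow> real \<Rightarrow> real \<Rightarrow> (nat \<times> nat \<Rightarrow> real) measure" where
  "entry_space N \<rho> \<alpha> =
     PiM (upper_idx N) (\<lambda>_. density lborel (normal_density 0 (\<rho> / (real N powr \<alpha>))))"

definition symW :: "(nat \<times> nat \<Rightarrow> real) \<Rightarrow> nat \<Rightarrow> nat \<Rightarrow> real" where
  "symW x i j = x (min i j, max i j)"

definition beta :: "nat \<Rightarrow> (nat \<times> nat \<Rightarrow> real) \<Rightarrow> nat \<Rightarrow> nat \<Rightarrow> real" where
  "beta N x i l = (\<Sum>p \<in> {p. length p = l \<and> set p \<subseteq> {..<N}}.
                     \<Prod>k<l. symW x ((i # p) ! k) ((i # p) ! Suc k))"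

definition Bmom :: "nat \<Rightarrow> real \<Rightarrow> real \<Rightarrow> nat \<Rightarrow> nat \<Rightarrow> real" where
  "Bmom N \<rho> \<alpha> l1 l2 =
     integral\<^sup>L (entry_space N \<rho> \<alpha>) (\<lambda>x. \<Sum>i<N. beta N x i l1 * beta N x i l2)"

end

theory Submission
  imports Defs
begin


definition ed :: "nat \<Rightarrow> nat \<Rightarrow> nat \<times> nat" where "ed u v = (min u v, max u v)"

fun edges :: "nat list \<Rightarrow> (nat \<times> nat) list" where
  "edges (x#y#r) = ed x y # edges (y#r)"
| "edges _ = []"

fun run :: "bool list \<Rightarrow> nat list \<Rightarrow> nat list \<Rightarrow> nat list" where
  "run [] st ls = []"
| "run (b#D) st ls = (if b then hd ls # run D (hd ls # st) (tl ls) else hd (tl st) # run D (tl st) ls)"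

fun dflags :: "nat list \<Rightarrow> nat list \<Rightarrow> bool list" where
  "dflags pre [] = []"
| "dflags pre (x#r) = (x \<notin> set pre) # dflags (pre@[x]) r"

fun newl :: "nat list \<Rightarrow> nat list \<Rightarrow> nat list" where
  "newl pre [] = []"
| "newl pre (x#r) = (if x \<in> set pre then newl (pre@[x]) r else x # newl (pre@[x]) r)"

fun hits :: "int \<Rightarrow> bool list \<Rightarrow> bool" where
  "hits h [] = False"
| "hits h (b#D) = ((if b then h+1 else h-1) = -1 \<or> hits (if b then h+1 else h-1) D)"

lemma ed_sym: "ed u v = ed v u" by (auto simp: ed_def)
lemma ed_inj: "ed u x = ed u y \<Longrightarrow> x = y" by (auto simp: ed_def min_def max_def split: if_splits)
lemma ed_mem: "ed u v = e \<Longrightarrow> u = fst e \<or> u = snd e" by (auto simp: ed_def min_def max_def split: if_splits)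
lemma ed_comp: "fst (ed u v) \<in> {u,v} \<and> snd (ed u v) \<in> {u,v}" by (auto simp: ed_def min_def max_def)

lemma edges_append: "xs \<noteq> [] \<Longrightarrow> edges (xs @ ys) = edges xs @ edges (last xs # ys)"
  by (induction xs rule: edges.induct) auto

lemma edges_snoc: "xs \<noteq> [] \<Longrightarrow> edges (xs @ [x]) = edges xs @ [ed (last xs) x]"
  by (simp add: edges_append)

lemma edges_vert: "e \<in> set (edges xs) \<Longrightarrow> fst e \<in> set xs \<and> snd e \<in> set xs"
  by (induction xs rule: edges.induct) (use ed_comp in fastforce)+

lemma length_edges: "length (edges xs) = length xs - 1"
  by (induction xs rule: edges.induct) auto

lemma set_newl: "set (newl pre r) = set r - set pre"
  by (induction pre r rule: newl.induct) auto

lemma distinct_newl: "distinct (newl pre r)"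
  by (induction pre r rule: newl.induct) (auto simp: set_newl)

lemma count_dflags: "count_list (dflags pre r) True = length (newl pre r)"
  by (induction pre r rule: dflags.induct) auto

lemma length_dflags: "length (dflags pre r) = length r"
  by (induction pre r rule: dflags.induct) auto

lemma count_bool: "count_list D True + count_list D False = length (D::bool list)"
  by (induction D) auto

lemma edges_mem_hd:
  assumes "distinct (u#st)" "ed u x \<in> set (edges (u#st))"
  shows "st \<noteq> [] \<and> x = hd st"
proof (cases st)
  case Nil then show ?thesis using assms by simp
next
  case (Cons y r)
  have "ed u x = ed u y \<or> ed u x \<in> set (edges (y#r))" using assms Cons by simp
  moreover have "ed u x \<notin> set (edges (y#r))"
  proof
    assume "ed u x \<in> set (edges (y#r))"
    then have "u \<in> set (y#r)" using edges_vert ed_mem by metis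
    then show False using assms Cons by simp
  qed
  ultimately show ?thesis using Cons ed_inj by auto
qed

lemma edges_notin:
  assumes "u \<notin> set st" "ed u x = e" shows "e \<notin> set (edges st)"
  using assms edges_vert ed_mem by metis

lemma dir1:
  assumes "pre \<noteq> []" "st \<noteq> []" "hd st = last pre" "distinct st" "set st \<subseteq> set pre"
    "distinct ls" "set ls \<inter> set pre = {}" "count_list D True \<le> length ls"
    "\<not> hits (int (length st) - 1) D"
    "\<forall>e. odd (count_list (edges pre) e) \<longleftrightarrow> e \<in> set (edges st)"
  shows "dflags pre (run D st ls) = D \<and> newl pre (run D st ls) = take (count_list D True) ls
    \<and> set (run D st ls) \<subseteq> set pre \<union> set ls \<and> length (run D st ls) = length D
    \<and> (int (count_list D True) + int (length st) = int (count_list D False) + 1 \<longrightarrow>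
         (\<forall>e. even (count_list (edges (pre @ run D st ls)) e)))"
  using assms
proof (induction D arbitrary: pre st ls)
  case Nil
  show ?case
  proof (intro conjI impI)
    assume "int (count_list [] True) + int (length st) = int (count_list [] False) + 1"
    then have "length st = 1" by simp
    then obtain v where "st = [v]" by (auto simp: length_Suc_conv)
    then show "\<forall>e. even (count_list (edges (pre @ run [] st ls)) e)" using Nil.prems(10) by auto
  qed auto
next
  case (Cons b D)
  show ?case
  proof (cases b)
    case True
    obtain x ls' where ls: "ls = x # ls'" using Cons.prems True by (cases ls) auto
    have xn: "x \<notin> set pre" using Cons.prems ls by auto
    define e0 where "e0 = ed (last pre) x"
    have e0n: "e0 \<notin> set (edges pre)" using edges_vert ed_mem xn e0_def ed_sym by metis
    have e0s: "e0 \<notin> set (edges st)" using Cons.prems(10) e0n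
      by (metis count_list_0_iff even_zero)
    have est: "edges (x # st) = e0 # edges st" using Cons.prems(2,3) e0_def ed_sym
      by (cases st) auto
    have IH: "dflags (pre@[x]) (run D (x#st) ls') = D \<and> newl (pre@[x]) (run D (x#st) ls') = take (count_list D True) ls'
    \<and> set (run D (x#st) ls') \<subseteq> set (pre@[x]) \<union> set ls' \<and> length (run D (x#st) ls') = length D
    \<and> (int (count_list D True) + int (length (x#st)) = int (count_list D False) + 1 \<longrightarrow>
         (\<forall>e. even (count_list (edges ((pre@[x]) @ run D (x#st) ls')) e)))"
    proof (rule Cons.IH)
      show "\<not> hits (int (length (x # st)) - 1) D" using Cons.prems True by auto
      show "\<forall>e. odd (count_list (edges (pre @ [x])) e) = (e \<in> set (edges (x # st)))"
        using Cons.prems(1,10) e0n est by (auto simp: edges_snoc e0_def[symmetric])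
          show "pre @ [x] \<noteq> []" "x # st \<noteq> []" "hd (x # st) = last (pre @ [x])" by simp_all
      show "distinct (x # st)" using Cons.prems(4,5) xn by auto
      show "set (x # st) \<subseteq> set (pre @ [x])" using Cons.prems(5) by auto
      show "distinct ls'" using Cons.prems(6) ls by simp
      show "set ls' \<inter> set (pre @ [x]) = {}" using Cons.prems(6,7) ls by auto
      show "count_list D True \<le> length ls'" using Cons.prems(8) ls True by simp
    qed
    show ?thesis using IH True ls xn by auto
  next
    case False
    obtain u y st' where st: "st = u # y # st'" using Cons.prems False
      by (cases st rule: remdups_adj.cases) auto
    define e0 where "e0 = ed (last pre) y"
    have e0st: "edges st = e0 # edges (y#st')" using st Cons.prems(3) e0_def by simp
    have e0n: "e0 \<notin> set (edges (y#st'))" using edges_notin[of u "y#st'" y e0] st Cons.prems(3,4) e0_def by auto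
    have yp: "y \<in> set pre" using st Cons.prems(5) by auto
    have IH: "dflags (pre@[y]) (run D (y#st') ls) = D \<and> newl (pre@[y]) (run D (y#st') ls) = take (count_list D True) ls
    \<and> set (run D (y#st') ls) \<subseteq> set (pre@[y]) \<union> set ls \<and> length (run D (y#st') ls) = length D
    \<and> (int (count_list D True) + int (length (y#st')) = int (count_list D False) + 1 \<longrightarrow>
         (\<forall>e. even (count_list (edges ((pre@[y]) @ run D (y#st') ls)) e)))"
    proof (rule Cons.IH)
      show "\<not> hits (int (length (y # st')) - 1) D" using Cons.prems False st by auto
      show "\<forall>e. odd (count_list (edges (pre @ [y])) e) = (e \<in> set (edges (y # st')))"
        using Cons.prems(1,10) e0n e0st by (auto simp: edges_snoc e0_def[symmetric])
          show "pre @ [y] \<noteq> []" "y # st' \<noteq> []" "hd (y # st') = last (pre @ [y])" by simp_all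
      show "distinct (y # st')" using Cons.prems(4) st by auto
      show "set (y # st') \<subseteq> set (pre @ [y])" using Cons.prems(5) st by auto
      show "distinct ls" using Cons.prems(6) by simp
      show "set ls \<inter> set (pre @ [y]) = {}" using Cons.prems(7) yp by auto
      show "count_list D True \<le> length ls" using Cons.prems(8) False by simp
    qed
    show ?thesis using IH False st yp by auto
  qed
qed

lemma dir2:
  assumes "w = pre @ rest" "pre \<noteq> []"
   and G1: "\<forall>e\<in>set (edges w). count_list (edges w) e = 2"
   and G2: "\<forall>p x r. w = p @ x # r \<longrightarrow> p \<noteq> [] \<longrightarrow> x \<in> set p \<longrightarrow> ed (last p) x \<in> set (edges p)"
   and "st \<noteq> []" "hd st = last pre" "distinct st" "set st \<subseteq> set pre"
   and "\<forall>e\<in>set (edges pre). count_list (edges pre) e = 1 \<longleftrightarrow> e \<in> set (edges st)"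
   and "set (edges st) \<subseteq> set (edges pre)"
  shows "rest = run (dflags pre rest) st (newl pre rest) \<and> \<not> hits (int (length st) - 1) (dflags pre rest)"
  using assms
proof (induction rest arbitrary: pre st)
  case Nil then show ?case by simp
next
  case (Cons x r)
  have w: "w = (pre @ [x]) @ r" using Cons.prems by simp
  define e0 where "e0 = ed (last pre) x"
  have ep: "edges (pre@[x]) = edges pre @ [e0]" using Cons.prems(2) by (simp add: edges_snoc e0_def)
  have ew: "edges w = edges (pre@[x]) @ edges (x # r)" using w edges_append[of "pre@[x]" r] by simp
  have cw: "count_list (edges pre) e0 + 1 \<le> count_list (edges w) e0" using ew ep by simp
  have e0w: "e0 \<in> set (edges w)" using ew ep by simp
  show ?case
  proof (cases "x \<in> set pre")
    case False
    have e0n: "e0 \<notin> set (edges pre)" using edges_vert ed_mem False e0_def ed_sym by metis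
    have e0s: "e0 \<notin> set (edges st)" using Cons.prems(10) e0n by blast
    have est: "edges (x # st) = e0 # edges st" using Cons.prems(5,6) e0_def ed_sym
      by (cases st) auto
    have IH: "r = run (dflags (pre@[x]) r) (x#st) (newl (pre@[x]) r) \<and> \<not> hits (int (length (x#st)) - 1) (dflags (pre@[x]) r)"
    proof (rule Cons.IH)
      show "w = (pre @ [x]) @ r" by fact
      show "pre @ [x] \<noteq> []" "x # st \<noteq> []" "hd (x # st) = last (pre @ [x])" by simp_all
      show "distinct (x # st)" using Cons.prems(7,8) False by auto
      show "set (x # st) \<subseteq> set (pre @ [x])" using Cons.prems(8) by auto
      show "\<forall>e\<in>set (edges (pre @ [x])). (count_list (edges (pre @ [x])) e = 1) = (e \<in> set (edges (x # st)))"
        using Cons.prems(9) e0n est ep by auto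
      show "set (edges (x # st)) \<subseteq> set (edges (pre @ [x]))" using Cons.prems(10) est ep by auto
    qed (use Cons.prems in auto)
    then show ?thesis using False by auto
  next
    case True
    have e0p: "e0 \<in> set (edges pre)" using G2 Cons.prems(1,2) True e0_def by blast
    have "count_list (edges w) e0 = 2" using G1 e0w by blast
    moreover have "count_list (edges pre) e0 \<noteq> 0" using e0p by (simp add: count_list_0_iff)
    ultimately have "count_list (edges pre) e0 = 1" using cw by linarith
    then have e0s: "e0 \<in> set (edges st)" using Cons.prems(9) e0p by blast
    obtain u st' where st: "st = u # st'" using Cons.prems(5) by (cases st) auto
    have u: "u = last pre" using st Cons.prems(6) by simp
    have "st' \<noteq> [] \<and> x = hd st'" using edges_mem_hd[of u st' x] e0s st u e0_def Cons.prems(7) by simp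
    then obtain st'' where st': "st' = x # st''" by (cases st') auto
    have est: "edges st = e0 # edges (x#st'')" using st st' u e0_def by simp
    have e0n: "e0 \<notin> set (edges (x#st''))" using edges_notin[of u "x#st''" x e0] st st' Cons.prems(7) e0_def u by auto
    have c2: "count_list (edges (pre@[x])) e0 = 2" using ep \<open>count_list (edges pre) e0 = 1\<close> by simp
    have IH: "r = run (dflags (pre@[x]) r) (x#st'') (newl (pre@[x]) r) \<and> \<not> hits (int (length (x#st'')) - 1) (dflags (pre@[x]) r)"
    proof (rule Cons.IH)
      show "w = (pre @ [x]) @ r" by fact
      show "pre @ [x] \<noteq> []" "x # st'' \<noteq> []" "hd (x # st'') = last (pre @ [x])" by simp_all
      show "distinct (x # st'')" using Cons.prems(7) st st' by auto
      show "set (x # st'') \<subseteq> set (pre @ [x])" using Cons.prems(8) st st' by auto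
      show "\<forall>e\<in>set (edges (pre @ [x])). (count_list (edges (pre @ [x])) e = 1) = (e \<in> set (edges (x # st'')))"
      proof
        fix e assume e: "e \<in> set (edges (pre @ [x]))"
        show "(count_list (edges (pre @ [x])) e = 1) = (e \<in> set (edges (x # st'')))"
        proof (cases "e = e0")
          case True then show ?thesis using c2 e0n by simp
        next
          case False
          then have "e \<in> set (edges pre)" using e ep by auto
          then show ?thesis using Cons.prems(9) False est ep by auto
        qed
      qed
      show "set (edges (x # st'')) \<subseteq> set (edges (pre @ [x]))" using Cons.prems(10) est ep by auto
    qed (use Cons.prems in auto)
    then show ?thesis using True st st' by auto
  qed
qed

lemma lemE: "pre \<noteq> [] \<Longrightarrow> card (set (edges pre)) + card (set rest - set pre) \<le> card (set (edges (pre @ rest)))"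
proof (induction rest arbitrary: pre)
  case Nil then show ?case by simp
next
  case (Cons x r)
  define e0 where "e0 = ed (last pre) x"
  have ep: "set (edges (pre@[x])) = insert e0 (set (edges pre))" using Cons.prems by (simp add: edges_snoc e0_def)
  have IH: "card (set (edges (pre@[x]))) + card (set r - set (pre@[x])) \<le> card (set (edges (pre @ x # r)))"
    using Cons.IH[of "pre@[x]"] by simp
  show ?case
  proof (cases "x \<in> set pre")
    case True
    have "card (set (edges pre)) \<le> card (set (edges (pre@[x])))" using ep by (simp add: card_insert_le)
    moreover have "set (x#r) - set pre = set r - set (pre@[x])" using True by auto
    ultimately show ?thesis using IH by simp
  next
    case False
    have e0n: "e0 \<notin> set (edges pre)" using edges_vert ed_mem False e0_def ed_sym by metis
    have "card (set (edges (pre@[x]))) = card (set (edges pre)) + 1" using ep e0n by simp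
    moreover have "set (x#r) - set pre = insert x (set r - set (pre@[x]))" using False by auto
    moreover have "x \<notin> set r - set (pre@[x])" by simp
    ultimately show ?thesis using IH by simp
  qed
qed

lemma card_set_edges: "xs \<noteq> [] \<Longrightarrow> card (set xs) \<le> card (set (edges xs)) + 1"
proof -
  assume "xs \<noteq> []"
  then obtain a t where xs: "xs = a # t" by (cases xs) auto
  have "card (set t - set [a]) \<le> card (set (edges ([a] @ t)))" using lemE[of "[a]" t] by simp
  moreover have "set xs = insert a (set t - {a})" using xs by auto
  moreover have "card (insert a (set t - {a})) = Suc (card (set t - {a}))" by (rule card_insert_disjoint) auto
  ultimately show ?thesis using xs by simp
qed

definition goodw :: "nat \<Rightarrow> nat \<Rightarrow> nat list \<Rightarrow> bool" where
  "goodw n N w \<longleftrightarrow> length w = 2*n+1 \<and> set w \<subseteq> {..<N} \<and> n+1 \<le> card (set w) \<and> (\<forall>e. even (count_list (edges w) e))"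

lemma good_props:
  assumes "goodw n N w"
  shows "card (set w) = n+1" "\<forall>e\<in>set (edges w). count_list (edges w) e = 2"
    "\<forall>p x r. w = p @ x # r \<longrightarrow> p \<noteq> [] \<longrightarrow> x \<in> set p \<longrightarrow> ed (last p) x \<in> set (edges p)"
proof -
  let ?es = "edges w"
  have len: "length ?es = 2*n" using assms by (simp add: goodw_def length_edges)
  have S: "sum (count_list ?es) (set ?es) = 2*n" using sum_count_set[of ?es "set ?es"] len by simp
  have ge2: "\<forall>e\<in>set ?es. 2 \<le> count_list ?es e"
  proof
    fix e assume "e \<in> set ?es"
    then have "count_list ?es e \<noteq> 0" by (simp add: count_list_0_iff)
    moreover have "even (count_list ?es e)" using assms unfolding goodw_def by blast
    ultimately show "2 \<le> count_list ?es e" by presburger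
  qed
  have "sum (\<lambda>_. 2) (set ?es) \<le> sum (count_list ?es) (set ?es)" using ge2 by (intro sum_mono) auto
  then have c1: "2 * card (set ?es) \<le> 2*n" using S by simp
  have wne: "w \<noteq> []" using assms by (auto simp: goodw_def)
  have c2: "card (set w) \<le> card (set ?es) + 1" using card_set_edges[OF wne] .
  have cw: "n+1 \<le> card (set w)" using assms by (simp add: goodw_def)
  show cs: "card (set w) = n+1" using c1 c2 cw by linarith
  have ce: "card (set ?es) = n" using c1 c2 cw by linarith
  show "\<forall>e\<in>set (edges w). count_list (edges w) e = 2"
  proof (rule ccontr)
    assume "\<not> (\<forall>e\<in>set (edges w). count_list (edges w) e = 2)"
    then obtain e1 where e1: "e1 \<in> set ?es" "count_list ?es e1 \<noteq> 2" by blast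
    moreover have "even (count_list ?es e1)" using assms unfolding goodw_def by blast
    moreover have "2 \<le> count_list ?es e1" using ge2 e1(1) by blast
    ultimately have "4 \<le> count_list ?es e1" using e1(2) by presburger
    moreover have "sum (\<lambda>_. 2) (set ?es - {e1}) \<le> sum (count_list ?es) (set ?es - {e1})" using ge2 by (intro sum_mono) auto
    moreover have "sum (count_list ?es) (set ?es) = count_list ?es e1 + sum (count_list ?es) (set ?es - {e1})"
      using e1 by (simp add: sum.remove)
    moreover have "card (set ?es - {e1}) = n - 1" using ce e1 by simp
    moreover have "sum (\<lambda>_. 2::nat) (set ?es - {e1}) = 2 * (n - 1)" using \<open>card (set ?es - {e1}) = n - 1\<close> by simp
    moreover have "n \<noteq> 0" using ce e1(1) by (metis card_0_eq empty_iff finite_set)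
    ultimately show False using S by linarith
  qed
  show "\<forall>p x r. w = p @ x # r \<longrightarrow> p \<noteq> [] \<longrightarrow> x \<in> set p \<longrightarrow> ed (last p) x \<in> set (edges p)"
  proof (intro allI impI, rule ccontr)
    fix p x r assume w: "w = p @ x # r" and p: "p \<noteq> []" and x: "x \<in> set p" and n0: "ed (last p) x \<notin> set (edges p)"
    have "card (set (edges (p@[x]))) + card (set r - set (p@[x])) \<le> card (set ?es)" using lemE[of "p@[x]" r] w by simp
    moreover have "card (set (edges (p@[x]))) = card (set (edges p)) + 1" using n0 p by (simp add: edges_snoc)
    moreover have "card (set p) \<le> card (set (edges p)) + 1" using card_set_edges[OF p] .
    moreover have "set w = set p \<union> (set r - set p)" using w x by auto
    moreover have "card (set p \<union> (set r - set p)) = card (set p) + card (set r - set p)" by (rule card_Un_disjoint) auto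
    moreover have "set (p@[x]) = set p" using x by auto
    ultimately have "card (set w) \<le> card (set ?es)" by simp
    then show False using cs ce by linarith
  qed
qed

definition walk :: "bool list \<Rightarrow> nat list \<Rightarrow> nat list" where "walk D L = hd L # run D [hd L] (tl L)"
definition dw :: "nat list \<Rightarrow> bool list" where "dw w = dflags [hd w] (tl w)"
definition Lw :: "nat list \<Rightarrow> nat list" where "Lw w = hd w # newl [hd w] (tl w)"
definition Dyck :: "nat \<Rightarrow> bool list set" where "Dyck n = {D. length D = 2*n \<and> count_list D True = n \<and> \<not> hits 0 D}"
definition Dist :: "nat \<Rightarrow> nat \<Rightarrow> nat list set" where "Dist n N = {L. length L = n+1 \<and> distinct L \<and> set L \<subseteq> {..<N}}"

lemma walk_props:
  assumes D: "D \<in> Dyck n" and L: "L \<in> Dist n N"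
  shows "goodw n N (walk D L) \<and> dw (walk D L) = D \<and> Lw (walk D L) = L"
proof -
  obtain a L' where aL: "L = a # L'" using L by (cases L) (auto simp: Dist_def)
  have cF: "count_list D False = n" using D count_bool[of D] by (simp add: Dyck_def)
  have R: "dflags [a] (run D [a] L') = D \<and> newl [a] (run D [a] L') = take (count_list D True) L'
    \<and> set (run D [a] L') \<subseteq> set [a] \<union> set L' \<and> length (run D [a] L') = length D
    \<and> (int (count_list D True) + int (length [a]) = int (count_list D False) + 1 \<longrightarrow>
         (\<forall>e. even (count_list (edges ([a] @ run D [a] L')) e)))"
    by (rule dir1) (use D L aL in \<open>auto simp: Dyck_def Dist_def\<close>)
  have w: "walk D L = a # run D [a] L'" by (simp add: walk_def aL)
  have dwe: "dw (walk D L) = D" using R w by (simp add: dw_def)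
  have Lwe: "Lw (walk D L) = L" using R w D L aL by (simp add: Lw_def Dyck_def Dist_def)
  have sw: "set (walk D L) = set L" using Lwe[symmetric] w by (simp add: Lw_def set_newl) 
  have "goodw n N (walk D L)"
    unfolding goodw_def
  proof (intro conjI)
    show "length (walk D L) = 2 * n + 1" using w R D by (simp add: Dyck_def)
    show "set (walk D L) \<subseteq> {..<N}" using sw L by (simp add: Dist_def)
    show "n + 1 \<le> card (set (walk D L))" using sw L by (simp add: Dist_def distinct_card)
    show "\<forall>e. even (count_list (edges (walk D L)) e)" using R w cF D by (simp add: Dyck_def)
  qed
  then show ?thesis using dwe Lwe by simp
qed

lemma good_walk:
  assumes g: "goodw n N w"
  shows "dw w \<in> Dyck n \<and> Lw w \<in> Dist n N \<and> walk (dw w) (Lw w) = w"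
proof -
  obtain a t where w: "w = a # t" using g by (cases w) (auto simp: goodw_def)
  note gp = good_props[OF g]
  have R: "t = run (dflags [a] t) [a] (newl [a] t) \<and> \<not> hits (int (length [a]) - 1) (dflags [a] t)"
    by (rule dir2[of w "[a]" t]) (use w gp in auto)
  have cn: "length (newl [a] t) = n"
  proof -
    have "length (newl [a] t) = card (set t - {a})" using distinct_card[OF distinct_newl, of "[a]" t] by (simp add: set_newl)
    moreover have "card (set w) = Suc (card (set t - {a}))"
    proof -
      have "set w = insert a (set t - {a})" using w by auto
      moreover have "card (insert a (set t - {a})) = Suc (card (set t - {a}))" by (rule card_insert_disjoint) auto
      ultimately show ?thesis by simp
    qed
    ultimately show ?thesis using gp(1) by simp
  qed
  have "dw w \<in> Dyck n" using R cn g w by (simp add: dw_def Dyck_def count_dflags length_dflags goodw_def)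
  moreover have "Lw w \<in> Dist n N" using cn g w distinct_newl[of "[a]" t] by (auto simp: Lw_def Dist_def set_newl goodw_def)
  moreover have "walk (dw w) (Lw w) = w" using R w by (simp add: walk_def dw_def Lw_def)
  ultimately show ?thesis by simp
qed

lemma card_good: "card {w. goodw n N w} = card (Dyck n) * card (Dist n N)"
proof -
  have eq: "{w. goodw n N w} = (\<lambda>(D,L). walk D L) ` (Dyck n \<times> Dist n N)"
  proof
    show "{w. goodw n N w} \<subseteq> (\<lambda>(D,L). walk D L) ` (Dyck n \<times> Dist n N)"
    proof
      fix w assume "w \<in> {w. goodw n N w}"
      then have "dw w \<in> Dyck n \<and> Lw w \<in> Dist n N \<and> walk (dw w) (Lw w) = w" using good_walk by blast
      then show "w \<in> (\<lambda>(D,L). walk D L) ` (Dyck n \<times> Dist n N)" by (auto intro!: image_eqI[where x="(dw w, Lw w)"])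
    qed
    show "(\<lambda>(D,L). walk D L) ` (Dyck n \<times> Dist n N) \<subseteq> {w. goodw n N w}" using walk_props by auto
  qed
  have inj: "inj_on (\<lambda>(D,L). walk D L) (Dyck n \<times> Dist n N)"
  proof (rule inj_onI, clarify)
    fix D L D' L' assume "D \<in> Dyck n" "L \<in> Dist n N" "D' \<in> Dyck n" "L' \<in> Dist n N" "walk D L = walk D' L'"
    then show "D = D' \<and> L = L'" using walk_props by metis
  qed
  show ?thesis unfolding eq by (simp add: card_image[OF inj] card_cartesian_product)
qed

fun rf :: "int \<Rightarrow> bool list \<Rightarrow> bool list" where
  "rf h [] = []"
| "rf h (b#D) = (if (if b then h+1 else h-1) = -1 then b # map Not D else b # rf (if b then h+1 else h-1) D)"

lemma rf_invol: "rf h (rf h D) = D"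
  by (induction D arbitrary: h) (auto simp: comp_def)

lemma length_rf[simp]: "length (rf h D) = length D"
  by (induction D arbitrary: h) auto

lemma hits_rf: "hits h (rf h D) = hits h D"
  by (induction D arbitrary: h) auto

lemma nohit_rf: "\<not> hits h D \<Longrightarrow> rf h D = D"
  by (induction D arbitrary: h) auto

lemma count_map_Not: "count_list (map Not D) True = count_list D False"
  by (induction D) auto

lemma count_map_Not2: "count_list (map Not D) False = count_list D True"
  by (induction D) auto

lemma ht_rf: "hits h D \<Longrightarrow> h + int (count_list (rf h D) True) - int (count_list (rf h D) False)
    = -2 - (h + int (count_list D True) - int (count_list D False))"
proof (induction D arbitrary: h)
  case Nil thus ?case by simp
next
  case (Cons b D)
  define h' where "h' = (if b then h+1 else h-1)"
  show ?case
  proof (cases "h' = -1")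
    case True then show ?thesis using h'_def by (cases b) (auto simp: count_map_Not count_map_Not2)
  next
    case False
    then have "hits h' D" using Cons.prems h'_def by (cases b) auto
    from Cons.IH[OF this] show ?thesis using False h'_def by (cases b) auto
  qed
qed

lemma neg_hits: "0 \<le> h \<Longrightarrow> h + int (count_list D True) - int (count_list D False) < 0 \<Longrightarrow> hits h D"
proof (induction D arbitrary: h)
  case Nil then show ?case by simp
next
  case (Cons b D)
  show ?case
  proof (cases b)
    case True
    then have "hits (h+1) D" using Cons by (intro Cons.IH) auto
    then show ?thesis using True by simp
  next
    case False
    show ?thesis
    proof (cases "h = 0")
      case True then show ?thesis using False by simp
    next
      case h: False
      then have "hits (h-1) D" using Cons False by (intro Cons.IH) auto
      then show ?thesis using False by simp
    qed
  qed
qed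

lemma card_bool_lists: "card {D::bool list. length D = m \<and> count_list D True = k} = m choose k"
proof (induction m arbitrary: k)
  case 0
  have "{D::bool list. length D = 0 \<and> count_list D True = k} = (if k = 0 then {[]} else {})" by auto
  then show ?case by simp
next
  case (Suc m)
  show ?case
  proof (cases k)
    case 0
    have "{D::bool list. length D = Suc m \<and> count_list D True = k} = (Cons False) ` {D. length D = m \<and> count_list D True = 0}"
      using 0 by (auto simp: length_Suc_conv split: if_splits)
    then show ?thesis using Suc.IH[of 0] 0 by (simp add: card_image)
  next
    case (Suc j)
    have "{D::bool list. length D = Suc m \<and> count_list D True = k} = (Cons True) ` {D. length D = m \<and> count_list D True = j}
       \<union> (Cons False) ` {D. length D = m \<and> count_list D True = k}"
      using Suc by (auto simp: length_Suc_conv split: if_splits)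
    moreover have fin: "finite {D::bool list. length D = m \<and> count_list D True = x}" for x
      by (rule finite_subset[OF _ finite_lists_length_eq[of "UNIV::bool set" m]]) auto
    moreover have "card ((Cons True) ` {D::bool list. length D = m \<and> count_list D True = j}
       \<union> (Cons False) ` {D. length D = m \<and> count_list D True = k}) = (m choose j) + (m choose k)"
      by (subst card_Un_disjoint) (auto simp: card_image Suc.IH fin)
    ultimately show ?thesis using Suc by simp
  qed
qed

lemma card_Dyck: "card (Dyck n) * (n+1) = (2*n) choose n"
proof (cases n)
  case 0
  have "Dyck 0 = {[]}" by (auto simp: Dyck_def)
  then show ?thesis using 0 by simp
next
  case (Suc m)
  define A where "A k = {D::bool list. length D = 2*n \<and> count_list D True = k}" for k
  have fA: "finite (A k)" for k unfolding A_def
    by (rule finite_subset[OF _ finite_lists_length_eq[of "UNIV::bool set" "2*n"]]) auto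
  define Bad where "Bad = {D \<in> A n. hits 0 D}"
  have split: "A n = Dyck n \<union> Bad" "Dyck n \<inter> Bad = {}" by (auto simp: A_def Dyck_def Bad_def)
  have c1: "card (A n) = card (Dyck n) + card Bad"
    using split fA[of n] by (metis card_Un_disjoint finite_Un)
  have "bij_betw (rf 0) Bad (A m)"
  proof (rule bij_betw_byWitness[where f'="rf 0"])
    show "\<forall>a\<in>Bad. rf 0 (rf 0 a) = a" "\<forall>a\<in>A m. rf 0 (rf 0 a) = a" by (simp_all add: rf_invol)
    show "rf 0 ` Bad \<subseteq> A m"
    proof
      fix D' assume "D' \<in> rf 0 ` Bad"
      then obtain D where D: "D \<in> Bad" "D' = rf 0 D" by blast
      have h: "int (count_list D' True) - int (count_list D' False) = -2 - (int (count_list D True) - int (count_list D False))"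
        using ht_rf[of 0 D] D by (simp add: Bad_def)
      have "count_list D' True + count_list D' False = 2*n" using count_bool[of D'] D by (simp add: Bad_def A_def)
      moreover have "count_list D True = n" "count_list D False = n" using D count_bool[of D] by (auto simp: Bad_def A_def)
      ultimately have "count_list D' True = m" using h Suc by linarith
      then show "D' \<in> A m" using D by (simp add: A_def Bad_def)
    qed
    show "rf 0 ` A m \<subseteq> Bad"
    proof
      fix D' assume "D' \<in> rf 0 ` A m"
      then obtain D where D: "D \<in> A m" "D' = rf 0 D" by blast
      have cD: "count_list D True = m" "count_list D False = m + 2" using D count_bool[of D] Suc by (auto simp: A_def)
      have hD: "hits 0 D" by (rule neg_hits) (use cD in auto)
      have h: "int (count_list D' True) - int (count_list D' False) = 0"
        using ht_rf[OF hD] D cD by simp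
      have "count_list D' True + count_list D' False = 2*n" using count_bool[of D'] D by (simp add: A_def)
      then have "count_list D' True = n" using h by linarith
      then show "D' \<in> Bad" using D hD hits_rf[of 0 D] by (simp add: A_def Bad_def)
    qed
  qed
  then have c2: "card Bad = card (A m)" by (rule bij_betw_same_card)
  have cA: "card (A k) = (2*n) choose k" for k unfolding A_def by (rule card_bool_lists)
  have bin: "((2*n) choose n) * n = ((2*n) choose m) * (n+1)"
  proof -
    have e: "2*n = Suc (m + Suc m)" using Suc by simp
    show ?thesis unfolding e using Suc_times_binomial_add[of m "Suc m"] Suc by (metis Suc_eq_plus1 mult.commute)
  qed
  have "((2*n) choose n) = card (Dyck n) + ((2*n) choose m)" using c1 c2 cA by simp
  then have "((2*n) choose n) * (n+1) = card (Dyck n) * (n+1) + ((2*n) choose n) * n" using bin by (simp add: algebra_simps)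
  then show ?thesis by simp
qed



definition mom :: "nat \<Rightarrow> real" where
  "mom c = (if even c then fact c / (2^(c div 2) * fact (c div 2)) else 0)"

lemma mom_nonneg: "0 \<le> mom c" by (simp add: mom_def)
lemma mom_0[simp]: "mom 0 = 1" by (simp add: mom_def)
lemma mom_1[simp]: "mom 1 = 0" by (simp add: mom_def)
lemma mom_Suc0[simp]: "mom (Suc 0) = 0" by (simp add: mom_def)
lemma mom_2[simp]: "mom 2 = 1" by (simp add: mom_def)
lemma mom_odd: "odd c \<Longrightarrow> mom c = 0" by (simp add: mom_def)

lemma aux_frac: "(x::real) + 1 > 0 \<Longrightarrow> p > 0 \<Longrightarrow> b > 0 \<Longrightarrow>
   (2*x+2)*(2*x+1)*a / (2 * p * ((x+1)*b)) = (2*x+1)*(a/(p*b))"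
proof -
  assume h: "x + 1 > 0" "p > 0" "b > 0"
  have e1: "(2*x+2)*(2*x+1)*a = (2*(x+1))*((2*x+1)*a)" by (simp add: algebra_simps)
  have e2: "2*p*((x+1)*b) = (2*(x+1))*(p*b)" by (simp add: algebra_simps)
  have "(2*(x+1))*((2*x+1)*a) / ((2*(x+1))*(p*b)) = ((2*x+1)*a) / (p*b)"
    using h by (intro mult_divide_mult_cancel_left) auto
  then show ?thesis unfolding e1 e2 by simp
qed

lemma mom_SS: "mom (Suc (Suc c)) = (c+1) * mom c"
proof (cases "even c")
  case True
  then obtain k where k: "c = 2*k" by blast
  have "Suc (Suc c) = 2*(Suc k)" using k by simp
  then have "mom (Suc (Suc c)) = fact (2*Suc k) / (2^(Suc k) * fact (Suc k))" by (simp add: mom_def)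
  also have "\<dots> = (2*k+1) * (fact (2*k) / (2^k * fact k))"
  proof -
    have f1: "fact (2*Suc k) = (2*real k+2)*(2*real k+1)*(fact (2*k)::real)"
      by (simp add: algebra_simps)
    have f2: "fact (Suc k) = (real k+1)*(fact k::real)" by simp
    have "(2::real)^(Suc k) = 2 * 2^k" by simp
    moreover have "(fact k::real) > 0" "(2::real)^k > 0" "real k + 1 > 0" by auto
    ultimately show ?thesis unfolding f1 f2 \<open>(2::real)^(Suc k) = 2 * 2^k\<close> using aux_frac[of "real k" "2^k" "fact k" "fact (2*k)"] by simp
  qed
  finally show ?thesis using k by (simp add: mom_def)
qed (simp add: mom_def)

lemma mom_mult: "mom a * mom b \<le> mom (a+b)"
proof (induction a rule: less_induct)
  case (less a)
  show ?case
  proof (cases a)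
    case 0 then show ?thesis by simp
  next
    case (Suc a1)
    show ?thesis
    proof (cases a1)
      case 0 then show ?thesis using Suc by (simp add: mom_nonneg)
    next
      case (Suc a2)
      have a: "a = Suc (Suc a2)" using Suc \<open>a = Suc a1\<close> by simp
      have "mom a * mom b = (a2+1) * (mom a2 * mom b)" using a by (simp add: mom_SS)
      also have "\<dots> \<le> (a2+1) * mom (a2+b)" using less.IH[of a2] a by (intro mult_left_mono) auto
      also have "\<dots> \<le> (a2+b+1) * mom (a2+b)" using mom_nonneg by (intro mult_right_mono) auto
      also have "\<dots> = mom (a+b)" using a mom_SS[of "a2+b"] by simp
      finally show ?thesis .
    qed
  qed
qed

lemma prod_mom_le: "finite A \<Longrightarrow> (\<Prod>e\<in>A. mom (f e)) \<le> mom (\<Sum>e\<in>A. f e)"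
proof (induction A rule: finite_induct)
  case empty then show ?case by simp
next
  case (insert x A)
  have "(\<Prod>e\<in>insert x A. mom (f e)) = mom (f x) * (\<Prod>e\<in>A. mom (f e))" using insert by simp
  also have "\<dots> \<le> mom (f x) * mom (\<Sum>e\<in>A. f e)" using insert mom_nonneg by (intro mult_left_mono) auto
  also have "\<dots> \<le> mom (f x + (\<Sum>e\<in>A. f e))" by (rule mom_mult)
  finally show ?case using insert by simp
qed

definition Pw :: "nat list \<Rightarrow> real" where
  "Pw w = (\<Prod>e\<in>set (edges w). mom (count_list (edges w) e))"

lemma Pw_nonneg: "0 \<le> Pw w" unfolding Pw_def by (intro prod_nonneg) (simp add: mom_nonneg)

lemma Pw_le: "Pw w \<le> mom (length (edges w))"
  unfolding Pw_def using prod_mom_le[of "set (edges w)" "count_list (edges w)"] sum_count_set[of "edges w" "set (edges w)"]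
  by simp

lemma Pw_odd_count: "odd (count_list (edges w) e) \<Longrightarrow> Pw w = 0"
proof -
  assume o: "odd (count_list (edges w) e)"
  then have "e \<in> set (edges w)" by (metis count_list_0_iff even_zero)
  then show "Pw w = 0" unfolding Pw_def using o by (auto simp: mom_odd intro!: bexI[of _ e])
qed

lemma Pw_odd_len: "odd (length (edges w)) \<Longrightarrow> Pw w = 0"
proof -
  assume o: "odd (length (edges w))"
  have "(\<Sum>e\<in>set (edges w). count_list (edges w) e) = length (edges w)" by (rule sum_count_set) auto
  then have "\<exists>e\<in>set (edges w). odd (count_list (edges w) e)" using o
    by (metis (no_types, lifting) dvd_sum)
  then show ?thesis using Pw_odd_count by blast
qed

lemma Pw_good: "goodw n N w \<Longrightarrow> Pw w = 1"
  using good_props(2)[of n N w] unfolding Pw_def by simp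

lemma set_Lw: "w \<noteq> [] \<Longrightarrow> set (Lw w) = set w"
  by (cases w) (auto simp: Lw_def set_newl)

lemma distinct_Lw: "distinct (Lw w)"
  by (simp add: Lw_def distinct_newl set_newl)

lemma small_card:
  assumes "n \<le> N"
  shows "card {w. length w = 2*n+1 \<and> set w \<subseteq> {..<N} \<and> card (set w) \<le> n} \<le> n^(2*n) * N^n"
proof (cases "n = 0")
  case True
  have "{w. length w = 2*n+1 \<and> set w \<subseteq> {..<N} \<and> card (set w) \<le> n} = {}"
    using True by (auto simp: length_Suc_conv)
  then show ?thesis by (metis card.empty zero_le)
next
  case False
  define Dp where "Dp = {L. length L = n \<and> distinct L \<and> set L \<subseteq> {..<N}}"
  define Ix where "Ix = {ix. set ix \<subseteq> {..<n} \<and> length ix = 2*n}"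
  define F where "F = (\<lambda>(L::nat list, ix::nat list). map (nth L) (0 # ix))"
  let ?S = "{w. length w = 2*n+1 \<and> set w \<subseteq> {..<N} \<and> card (set w) \<le> n}"
  have sub: "?S \<subseteq> F ` (Dp \<times> Ix)"
  proof
    fix w assume w: "w \<in> ?S"
    then obtain a t where at: "w = a # t" by (cases w) auto
    define L0 where "L0 = Lw w"
    have sL0: "set L0 = set w" using at by (simp add: L0_def set_Lw)
    have dL0: "distinct L0" by (simp add: L0_def distinct_Lw)
    have lL0: "length L0 = card (set w)" using distinct_card[OF dL0] sL0 by simp
    have hL0: "L0 = a # newl [a] t" using at by (simp add: L0_def Lw_def)
    have "card ({..<N} - set w) = N - card (set w)" using w by (simp add: card_Diff_subset)
    then have "n - card (set w) \<le> card ({..<N} - set w)" using assms by simp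
    then obtain T where T: "T \<subseteq> {..<N} - set w" "card T = n - card (set w)" "finite T"
      by (rule obtain_subset_with_card_n)
    define L where "L = L0 @ sorted_list_of_set T"
    have dL: "distinct L" using dL0 T sL0 by (auto simp: L_def)
    have lL: "length L = n" using T lL0 w by (simp add: L_def)
    have sL: "set L \<subseteq> {..<N}" using T sL0 w by (auto simp: L_def)
    have wL: "set w \<subseteq> set L" using sL0 by (auto simp: L_def)
    define idx where "idx v = (THE i. i < length L \<and> L!i = v)" for v
    have idx: "idx v < n \<and> L ! idx v = v" if "v \<in> set w" for v
    proof -
      have "v \<in> set L" using wL that by auto
      then have "\<exists>!i. i < length L \<and> L!i = v" using distinct_Ex1[OF dL] by blast
      then show ?thesis unfolding idx_def using lL by (metis (mono_tags, lifting) theI')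
    qed
    have L0n: "L ! 0 = a" using hL0 by (simp add: L_def)
    have "(L, map idx t) \<in> Dp \<times> Ix" using dL lL sL idx at w by (auto simp: Dp_def Ix_def)
    moreover have "F (L, map idx t) = w" using L0n idx at by (auto simp: F_def intro!: map_idI)
    ultimately show "w \<in> F ` (Dp \<times> Ix)" by (metis image_eqI)
  qed
  have fD: "finite Dp" unfolding Dp_def
    by (rule finite_subset[OF _ finite_lists_length_eq[of "{..<N}" n]]) auto
  have fI: "finite Ix" unfolding Ix_def by (rule finite_lists_length_eq) simp
  have cD: "card Dp \<le> N^n"
  proof -
    have "card Dp \<le> card {xs. set xs \<subseteq> {..<N} \<and> length xs = n}"
      unfolding Dp_def by (rule card_mono[OF finite_lists_length_eq]) auto
    then show ?thesis by (simp add: card_lists_length_eq)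
  qed
  have cI: "card Ix = n^(2*n)" unfolding Ix_def by (simp add: card_lists_length_eq)
  have "card ?S \<le> card (F ` (Dp \<times> Ix))" using sub fD fI by (intro card_mono) auto
  also have "\<dots> \<le> card (Dp \<times> Ix)" by (rule card_image_le) (use fD fI in auto)
  also have "\<dots> = card Dp * card Ix" by (simp add: card_cartesian_product)
  also have "\<dots> \<le> N^n * n^(2*n)" using cD cI by simp
  finally show ?thesis by (simp add: mult.commute)
qed

lemma sum_bounds:
  assumes "n+1 \<le> N"
  shows "real (card (Dyck n) * card (Dist n N)) \<le> (\<Sum>w\<in>{w. set w \<subseteq> {..<N} \<and> length w = 2*n+1}. Pw w)"
    "(\<Sum>w\<in>{w. set w \<subseteq> {..<N} \<and> length w = 2*n+1}. Pw w)
       \<le> real (card (Dyck n) * card (Dist n N)) + mom (2*n) * (n^(2*n) * N^n)"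
proof -
  define Wk where "Wk = {w. set w \<subseteq> {..<N} \<and> length w = 2*n+1}"
  have fW: "finite Wk" unfolding Wk_def by (rule finite_lists_length_eq) simp
  define G where "G = {w. goodw n N w}"
  define H where "H = {w \<in> Wk. n+1 \<le> card (set w)}"
  define S where "S = {w \<in> Wk. card (set w) \<le> n}"
  have WHS: "Wk = H \<union> S" "H \<inter> S = {}" by (auto simp: H_def S_def)
  have fH: "finite H" "finite S" using fW by (auto simp: H_def S_def)
  have GH: "G \<subseteq> H" by (auto simp: G_def H_def Wk_def goodw_def)
  have sW: "sum Pw Wk = sum Pw H + sum Pw S" using WHS fH by (simp add: sum.union_disjoint)
  have "sum Pw H = sum Pw G"
  proof (rule sum.mono_neutral_right[OF fH(1) GH])
    show "\<forall>i\<in>H - G. Pw i = 0"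
    proof
      fix w assume "w \<in> H - G"
      then have "\<not> (\<forall>e. even (count_list (edges w) e))" by (auto simp: H_def G_def Wk_def goodw_def)
      then show "Pw w = 0" using Pw_odd_count by blast
    qed
  qed
  also have "\<dots> = real (card G)" by (simp add: G_def Pw_good)
  also have "\<dots> = real (card (Dyck n) * card (Dist n N))" by (simp add: G_def card_good)
  finally have sH: "sum Pw H = real (card (Dyck n) * card (Dist n N))" .
  have sS0: "0 \<le> sum Pw S" by (intro sum_nonneg) (simp add: Pw_nonneg)
  have "sum Pw S \<le> sum (\<lambda>_. mom (2*n)) S"
  proof (rule sum_mono)
    fix w assume "w \<in> S"
    then have "length (edges w) = 2*n" by (simp add: S_def Wk_def length_edges)
    then show "Pw w \<le> mom (2*n)" using Pw_le[of w] by simp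
  qed
  also have "\<dots> = real (card S) * mom (2*n)" by simp
  also have "\<dots> \<le> real (n^(2*n) * N^n) * mom (2*n)"
  proof (intro mult_right_mono)
    have "S = {w. length w = 2*n+1 \<and> set w \<subseteq> {..<N} \<and> card (set w) \<le> n}" by (auto simp: S_def Wk_def)
    then have "card S \<le> n^(2*n) * N^n" using small_card[of n N] assms by simp
    then show "real (card S) \<le> real (n^(2*n) * N^n)" by linarith
  qed (simp add: mom_nonneg)
  finally have sS: "sum Pw S \<le> mom (2*n) * (n^(2*n) * N^n)" by (simp add: mult.commute)
  show "real (card (Dyck n) * card (Dist n N)) \<le> (\<Sum>w\<in>{w. set w \<subseteq> {..<N} \<and> length w = 2*n+1}. Pw w)"
    using sW sH sS0 by (simp add: Wk_def)
  show "(\<Sum>w\<in>{w. set w \<subseteq> {..<N} \<and> length w = 2*n+1}. Pw w)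
       \<le> real (card (Dyck n) * card (Dist n N)) + mom (2*n) * (n^(2*n) * N^n)"
    using sW sH sS by (simp add: Wk_def)
qed

lemma card_Dist: "n + 1 \<le> N \<Longrightarrow> real (card (Dist n N)) = (\<Prod>k\<in>{0..n}. real N - real k)"
proof -
  assume a: "n + 1 \<le> N"
  have "card (Dist n N) = \<Prod>{N - (n+1) + 1 .. N}"
    unfolding Dist_def using card_lists_distinct_length_eq[of "{..<N}" "n+1"] a by (simp add: conj_commute)
  also have "\<dots> = (\<Prod>k\<in>{0..n}. N - k)"
    by (rule prod.reindex_bij_witness[where i="\<lambda>k. N - k" and j="\<lambda>i. N - i"]) (use a in auto)
  finally have "real (card (Dist n N)) = (\<Prod>k\<in>{0..n}. real (N - k))" by simp
  also have "\<dots> = (\<Prod>k\<in>{0..n}. real N - real k)" using a by (intro prod.cong) auto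
  finally show ?thesis .
qed

lemma card_Dist_le: "card (Dist n N) \<le> N^(n+1)"
proof -
  have "card (Dist n N) \<le> card {xs. set xs \<subseteq> {..<N} \<and> length xs = n+1}"
    unfolding Dist_def by (rule card_mono[OF finite_lists_length_eq]) auto
  then show ?thesis by (simp add: card_lists_length_eq)
qed



lemma normal_moment_gen:
  assumes s: "0 < \<sigma>"
  shows "has_bochner_integral (density lborel (normal_density 0 \<sigma>)) (\<lambda>x. x^c) (\<sigma>^c * mom c)"
proof (rule has_bochner_integral_density)
  show "(\<lambda>x::real. x^c) \<in> borel_measurable lborel" by measurable
  show "normal_density 0 \<sigma> \<in> borel_measurable lborel" by measurable
  show "AE x in lborel. 0 \<le> normal_density 0 \<sigma> x" by simp
  show "has_bochner_integral lborel (\<lambda>x. normal_density 0 \<sigma> x *\<^sub>R x ^ c) (\<sigma> ^ c * mom c)"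
  proof (cases "even c")
    case True
    then obtain k where k: "c = 2*k" by blast
    have "has_bochner_integral lborel (\<lambda>x. normal_density 0 \<sigma> x * (x - 0) ^ (2 * k)) (fact (2 * k) / ((2 / \<sigma>\<^sup>2)^k * fact k))"
      using normal_moment_even[OF s] .
    moreover have "fact (2 * k) / ((2 / \<sigma>\<^sup>2)^k * fact k) = \<sigma>^c * mom c"
    proof -
      have "(2 / \<sigma>\<^sup>2)^k = 2^k / \<sigma>^c" using k by (simp add: power_divide power_mult)
      moreover have "\<sigma>^c > 0" "(2::real)^k > 0" "(fact k::real) > 0" using s by auto
      ultimately show ?thesis using k by (simp add: mom_def field_simps)
    qed
    ultimately show ?thesis using k by simp
  next
    case False
    then obtain k where k: "c = 2*k+1" using oddE by blast
    have "has_bochner_integral lborel (\<lambda>x. normal_density 0 \<sigma> x * (x - 0) ^ (2 * k + 1)) 0"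
      using normal_moment_odd[OF s] .
    then show ?thesis using k by (simp add: mom_def)
  qed
qed

lemma gauss_moment_mom: "gauss_moment c = mom c"
  unfolding gauss_moment_def using has_bochner_integral_integral_eq[OF normal_moment_gen[of 1 c]] by simp

lemma prod_list_count:
  fixes f :: "'a \<Rightarrow> real"
  shows "finite A \<Longrightarrow> set xs \<subseteq> A \<Longrightarrow> prod_list (map f xs) = (\<Prod>e\<in>A. f e ^ count_list xs e)"
proof (induction xs)
  case Nil then show ?case by simp
next
  case (Cons a xs)
  have "(\<Prod>e\<in>A. f e ^ count_list (a#xs) e) = (\<Prod>e\<in>A. f e ^ count_list xs e * (if e = a then f e else 1))"
    by (intro prod.cong) auto
  also have "\<dots> = (\<Prod>e\<in>A. f e ^ count_list xs e) * (\<Prod>e\<in>A. (if e = a then f e else 1))"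
    by (rule prod.distrib)
  also have "(\<Prod>e\<in>A. (if e = a then f e else 1)) = f a" using Cons.prems by (simp add: prod.delta)
  finally show ?case using Cons by (simp add: mult.commute)
qed

lemma edges_ord: "e \<in> set (edges xs) \<Longrightarrow> fst e \<le> snd e"
  by (induction xs rule: edges.induct) (auto simp: ed_def)

lemma edges_upper: "set w \<subseteq> {..<N} \<Longrightarrow> set (edges w) \<subseteq> upper_idx N"
proof
  fix e assume "set w \<subseteq> {..<N}" "e \<in> set (edges w)"
  then show "e \<in> upper_idx N" using edges_ord[of e w] edges_vert[of e w]
    by (cases e) (auto simp: upper_idx_def)
qed

lemma finite_upper: "finite (upper_idx N)"
  by (rule finite_subset[of _ "{..<N} \<times> {..<N}"]) (auto simp: upper_idx_def)

lemma walk_integral: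
  assumes "0 < \<rho>" "1 \<le> N" "set w \<subseteq> {..<N}"
  shows "integrable (entry_space N \<rho> \<alpha>) (\<lambda>x. prod_list (map x (edges w)))"
    "integral\<^sup>L (entry_space N \<rho> \<alpha>) (\<lambda>x. prod_list (map x (edges w))) = (\<rho> / real N powr \<alpha>)^(length (edges w)) * Pw w"
proof -
  define \<sigma> where "\<sigma> = \<rho> / real N powr \<alpha>"
  have sp: "0 < \<sigma>" using assms by (simp add: \<sigma>_def)
  define G where "G = density lborel (normal_density 0 \<sigma>)"
  interpret G: prob_space G unfolding G_def by (rule prob_space_normal_density[OF sp])
  interpret P: product_sigma_finite "\<lambda>_. G" ..
  define I where "I = upper_idx N"
  define es where "es = edges w"
  have fI: "finite I" by (simp add: I_def finite_upper)
  have esI: "set es \<subseteq> I" using edges_upper[OF assms(3)] by (simp add: I_def es_def)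
  have M: "entry_space N \<rho> \<alpha> = Pi\<^sub>M I (\<lambda>_. G)" by (simp add: entry_space_def I_def G_def \<sigma>_def)
  have fe: "(\<lambda>x::(nat\<times>nat\<Rightarrow>real). prod_list (map x es)) = (\<lambda>x. \<Prod>i\<in>I. x i ^ count_list es i)"
    by (intro ext) (rule prod_list_count[OF fI esI])
  have mi: "has_bochner_integral G (\<lambda>t. t ^ c) (\<sigma>^c * mom c)" for c
    unfolding G_def by (rule normal_moment_gen[OF sp])
  have intf: "integrable G (\<lambda>t. t ^ count_list es i)" for i using mi by (auto simp: has_bochner_integral_iff)
  show "integrable (entry_space N \<rho> \<alpha>) (\<lambda>x. prod_list (map x (edges w)))"
    unfolding M es_def[symmetric] fe by (rule P.product_integrable_prod[OF fI intf])
  have "integral\<^sup>L (entry_space N \<rho> \<alpha>) (\<lambda>x. prod_list (map x es)) = (\<Prod>i\<in>I. integral\<^sup>L G (\<lambda>t. t ^ count_list es i))"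
    unfolding M fe by (rule P.product_integral_prod[OF fI intf])
  also have "\<dots> = (\<Prod>i\<in>I. \<sigma> ^ count_list es i * mom (count_list es i))"
    using mi by (simp add: has_bochner_integral_iff)
  also have "\<dots> = (\<Prod>i\<in>I. \<sigma> ^ count_list es i) * (\<Prod>i\<in>I. mom (count_list es i))"
    by (rule prod.distrib)
  also have "(\<Prod>i\<in>I. \<sigma> ^ count_list es i) = \<sigma> ^ (\<Sum>i\<in>I. count_list es i)"
    by (simp add: power_sum)
  also have "(\<Sum>i\<in>I. count_list es i) = length es" by (rule sum_count_set[OF esI fI])
  also have "(\<Prod>i\<in>I. mom (count_list es i)) = (\<Prod>i\<in>set es. mom (count_list es i))"
    by (rule prod.mono_neutral_right[OF fI esI]) (auto simp: count_list_0_iff)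
  finally show "integral\<^sup>L (entry_space N \<rho> \<alpha>) (\<lambda>x. prod_list (map x (edges w))) = (\<rho> / real N powr \<alpha>)^(length (edges w)) * Pw w"
    by (simp add: es_def Pw_def \<sigma>_def)
qed

lemma prod_symW_gen: "(\<Prod>k<length q - 1. symW x (q!k) (q!Suc k)) = prod_list (map x (edges q))"
proof (induction q rule: edges.induct)
  case (1 a b r)
  have l: "length (a#b#r) - 1 = Suc (length r)" by simp
  have "(\<Prod>k<length (a#b#r) - 1. symW x ((a#b#r)!k) ((a#b#r)!Suc k))
      = symW x ((a#b#r)!0) ((a#b#r)!Suc 0) * (\<Prod>k<length r. symW x ((a#b#r)!Suc k) ((a#b#r)!Suc (Suc k)))"
    unfolding l by (rule prod.lessThan_Suc_shift)
  then have "(\<Prod>k<length (a#b#r) - 1. symW x ((a#b#r)!k) ((a#b#r)!Suc k))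
      = symW x a b * (\<Prod>k<length r. symW x ((b#r)!k) ((b#r)!Suc k))" by simp
  then show ?case using 1 by (simp add: symW_def ed_def)
qed auto

lemma beta_walk: "beta N x i l = (\<Sum>p\<in>{p. length p = l \<and> set p \<subseteq> {..<N}}. prod_list (map x (edges (i#p))))"
  unfolding beta_def
proof (intro sum.cong refl)
  fix p assume "p \<in> {p. length p = l \<and> set p \<subseteq> {..<N}}"
  then have "length (i#p) - 1 = l" by simp
  then show "(\<Prod>k<l. symW x ((i # p) ! k) ((i # p) ! Suc k)) = prod_list (map x (edges (i # p)))"
    using prod_symW_gen[of x "i#p"] by simp
qed

lemma edges_rev: "edges (rev xs) = rev (edges xs)"
proof (induction xs rule: edges.induct)
  case (1 a b r)
  have "edges (rev (a#b#r)) = edges (rev (b#r) @ [a])" by simp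
  also have "\<dots> = edges (rev (b#r)) @ [ed b a]" by (subst edges_snoc) auto
  finally show ?case using 1 by (simp add: ed_sym)
qed auto

lemma E_split: fixes x :: "nat \<times> nat \<Rightarrow> real" shows "prod_list (map x (edges (rev p @ i # q))) = prod_list (map x (edges (i#p))) * prod_list (map x (edges (i#q)))"
proof -
  have "edges (rev p @ i # q) = edges ((rev p @ [i]) @ q)" by simp
  also have "\<dots> = edges (rev p @ [i]) @ edges (i # q)" by (subst edges_append) auto
  also have "edges (rev p @ [i]) = rev (edges (i#p))" using edges_rev[of "i#p"] by simp
  finally show ?thesis by (simp add: rev_map[symmetric] prod_list.rev)
qed

lemma nth_bound: "set b \<subseteq> {..<N} \<Longrightarrow> k < length b \<Longrightarrow> b!k < N"
  using nth_mem by blast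

lemma integrand_eq:
  "(\<Sum>i<N. beta N x i l1 * beta N x i l2) = (\<Sum>w\<in>{w. set w \<subseteq> {..<N} \<and> length w = l1+l2+1}. prod_list (map x (edges w)))"
proof -
  define P where "P l = {p. length p = l \<and> set p \<subseteq> {..<N}}" for l
  define E where "E w = prod_list (map x (edges w))" for w
  have "(\<Sum>i<N. beta N x i l1 * beta N x i l2) = (\<Sum>i<N. \<Sum>p\<in>P l1. \<Sum>q\<in>P l2. E (rev p @ i # q))"
    by (simp add: beta_walk sum_product E_split E_def P_def)
  also have "\<dots> = (\<Sum>(i,p,q)\<in>{..<N} \<times> P l1 \<times> P l2. E (rev p @ i # q))"
    by (simp add: sum.cartesian_product)
  also have "\<dots> = (\<Sum>w\<in>{w. set w \<subseteq> {..<N} \<and> length w = l1+l2+1}. E w)"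
    by (rule sum.reindex_bij_witness[where j="\<lambda>(i,p,q). rev p @ i # q" and i="\<lambda>w. (w!l1, rev (take l1 w), drop (Suc l1) w)"])
       (auto simp: P_def nth_append id_take_nth_drop[symmetric] nth_bound dest: in_set_takeD in_set_dropD)
  finally show ?thesis by (simp add: E_def)
qed

lemma Bmom_eq:
  assumes "0 < \<rho>" "1 \<le> N"
  shows "Bmom N \<rho> \<alpha> l1 l2 = (\<rho> / real N powr \<alpha>)^(l1+l2) * (\<Sum>w\<in>{w. set w \<subseteq> {..<N} \<and> length w = l1+l2+1}. Pw w)"
proof -
  let ?W = "{w. set w \<subseteq> {..<N} \<and> length w = l1+l2+1}"
  have "Bmom N \<rho> \<alpha> l1 l2 = integral\<^sup>L (entry_space N \<rho> \<alpha>) (\<lambda>x. \<Sum>w\<in>?W. prod_list (map x (edges w)))"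
    unfolding Bmom_def by (simp add: integrand_eq)
  also have "\<dots> = (\<Sum>w\<in>?W. integral\<^sup>L (entry_space N \<rho> \<alpha>) (\<lambda>x. prod_list (map x (edges w))))"
    by (rule Bochner_Integration.integral_sum[where f="\<lambda>w (x::nat\<times>nat\<Rightarrow>real). prod_list (map x (edges w))"]) (use walk_integral(1)[OF assms] in auto)
  also have "\<dots> = (\<Sum>w\<in>?W. (\<rho> / real N powr \<alpha>)^(l1+l2) * Pw w)"
    by (intro sum.cong refl) (simp add: walk_integral(2)[OF assms] length_edges)
  finally show ?thesis by (simp add: sum_distrib_left)
qed

theorem mainTheorem7:
  fixes N T l1 l2 :: nat and \<rho> \<alpha> :: real
  assumes "N \<ge> 1" "T \<ge> 1" "\<rho> > 0" "l1 \<le> T" "l2 \<le> T"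
  shows "(odd (l1 + l2) \<longrightarrow> Bmom N \<rho> \<alpha> l1 l2 = 0)
       \<and> (even (l1 + l2) \<and> (l1 + l2) div 2 + 1 \<le> N \<longrightarrow>
           (let s = l1 + l2 in
             \<rho> ^ s / (real (s div 2) + 1) * real (s choose (s div 2))
               * (\<Prod>k\<in>{0..s div 2}. real N - real k) / real N powr (\<alpha> * real s)
             \<le> Bmom N \<rho> \<alpha> l1 l2
           \<and> Bmom N \<rho> \<alpha> l1 l2
             \<le> \<rho> ^ s / (real (s div 2) + 1) * real (s choose (s div 2))
                 * real N powr (real s * (1/2 - \<alpha>) + 1)
               + \<rho> ^ s * gauss_moment s * (real s / 2) ^ s * real N powr (real s * (1/2 - \<alpha>))))"
proof -
  define s where "s = l1 + l2"
  define W where "W = {w. set w \<subseteq> {..<N} \<and> length w = s+1}"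
  have B: "Bmom N \<rho> \<alpha> l1 l2 = (\<rho> / real N powr \<alpha>)^s * (\<Sum>w\<in>W. Pw w)"
    using Bmom_eq[OF assms(3,1)] by (simp add: s_def W_def)
  have Npos: "real N > 0" using assms by simp
  define K where "K = real N powr (\<alpha> * real s)"
  have Kpos: "K > 0" using Npos by (simp add: K_def)
  have sig: "(\<rho> / real N powr \<alpha>)^s = \<rho>^s / K"
    using powr_power[of "real N" \<alpha> s] Npos by (simp add: K_def power_divide mult.commute)
  have part1: "odd s \<longrightarrow> Bmom N \<rho> \<alpha> l1 l2 = 0"
  proof
    assume o: "odd s"
    have "\<forall>w\<in>W. Pw w = 0" using o by (auto simp: W_def length_edges intro!: Pw_odd_len)
    then show "Bmom N \<rho> \<alpha> l1 l2 = 0" using B by simp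
  qed
  have part2: "even s \<and> s div 2 + 1 \<le> N \<longrightarrow>
             \<rho> ^ s / (real (s div 2) + 1) * real (s choose (s div 2))
               * (\<Prod>k\<in>{0..s div 2}. real N - real k) / real N powr (\<alpha> * real s)
             \<le> Bmom N \<rho> \<alpha> l1 l2
           \<and> Bmom N \<rho> \<alpha> l1 l2
             \<le> \<rho> ^ s / (real (s div 2) + 1) * real (s choose (s div 2))
                 * real N powr (real s * (1/2 - \<alpha>) + 1)
               + \<rho> ^ s * gauss_moment s * (real s / 2) ^ s * real N powr (real s * (1/2 - \<alpha>))"
  proof (intro impI)
    assume h: "even s \<and> s div 2 + 1 \<le> N"
    define n where "n = s div 2"
    have sn: "s = 2*n" using h by (simp add: n_def)
    have nN: "n + 1 \<le> N" using h by (simp add: n_def)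
    have W2: "W = {w. set w \<subseteq> {..<N} \<and> length w = 2*n+1}" by (simp add: W_def sn)
    define C where "C = card (Dyck n)"
    define D where "D = card (Dist n N)"
    have binom: "real (s choose n) = real C * (real n + 1)"
    proof -
      have "s choose n = C * (n+1)" using card_Dyck[of n] sn by (simp add: C_def)
      then show ?thesis by (simp add: algebra_simps)
    qed
    have prodD: "(\<Prod>k\<in>{0..n}. real N - real k) = real D"
      using card_Dist[OF nN] by (simp add: D_def n_def)
    have lowS: "real (C * D) \<le> (\<Sum>w\<in>W. Pw w)" using sum_bounds(1)[OF nN] by (simp add: W2 C_def D_def)
    have upS: "(\<Sum>w\<in>W. Pw w) \<le> real (C * D) + mom (2*n) * (n^(2*n) * N^n)"
      using sum_bounds(2)[OF nN] by (simp add: W2 C_def D_def)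
    have DN: "real D \<le> real N ^ (n+1)" using card_Dist_le[of n N] unfolding D_def by (metis of_nat_le_iff of_nat_power)
    have rs: "\<rho>^s / K \<ge> 0" using Kpos assms by simp
    have lhs: "\<rho> ^ s / (real (s div 2) + 1) * real (s choose (s div 2))
               * (\<Prod>k\<in>{0..s div 2}. real N - real k) / real N powr (\<alpha> * real s) = \<rho>^s / K * real (C * D)"
    proof -
      have "real n + 1 > 0" by simp
      then have "\<rho>^s / (real n + 1) * (real C * (real n + 1)) = \<rho>^s * real C" by simp
      then show ?thesis unfolding n_def[symmetric] binom prodD K_def[symmetric] by simp
    qed
    have e1: "real N powr (real s * (1/2 - \<alpha>) + 1) = real N ^ (n+1) / K"
    proof -
      have x: "real s * (1/2 - \<alpha>) + 1 = real (n+1) - \<alpha> * real s" using sn by (simp add: algebra_simps)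
      have "real N powr (real s * (1/2 - \<alpha>) + 1) = real N powr real (n+1) / K" unfolding x K_def by (rule powr_diff)
      then show ?thesis using powr_realpow[OF Npos, of "n+1"] by simp
    qed
    have e2: "real N powr (real s * (1/2 - \<alpha>)) = real N ^ n / K"
    proof -
      have x: "real s * (1/2 - \<alpha>) = real n - \<alpha> * real s" using sn by (simp add: algebra_simps)
      have "real N powr (real s * (1/2 - \<alpha>)) = real N powr real n / K" unfolding x K_def by (rule powr_diff)
      then show ?thesis using powr_realpow[OF Npos, of "n"] by simp
    qed
    have rhs: "\<rho> ^ s / (real (s div 2) + 1) * real (s choose (s div 2))
                 * real N powr (real s * (1/2 - \<alpha>) + 1)
               + \<rho> ^ s * gauss_moment s * (real s / 2) ^ s * real N powr (real s * (1/2 - \<alpha>))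
             = \<rho>^s / K * (real C * real N ^ (n+1) + mom (2*n) * (real n^(2*n) * real N^n))"
    proof -
      have "real n + 1 > 0" by simp
      moreover have "real s / 2 = real n" using sn by simp
      moreover have "\<rho>^s / (real n + 1) * (real C * (real n + 1)) = \<rho>^s * real C" using calculation(1) by simp
      ultimately show ?thesis unfolding n_def[symmetric] binom e1 e2 gauss_moment_mom using sn
        by (simp add: algebra_simps)
    qed
    show "\<rho> ^ s / (real (s div 2) + 1) * real (s choose (s div 2))
               * (\<Prod>k\<in>{0..s div 2}. real N - real k) / real N powr (\<alpha> * real s)
             \<le> Bmom N \<rho> \<alpha> l1 l2
           \<and> Bmom N \<rho> \<alpha> l1 l2
             \<le> \<rho> ^ s / (real (s div 2) + 1) * real (s choose (s div 2))
                 * real N powr (real s * (1/2 - \<alpha>) + 1)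
               + \<rho> ^ s * gauss_moment s * (real s / 2) ^ s * real N powr (real s * (1/2 - \<alpha>))"
    proof
      show "\<rho> ^ s / (real (s div 2) + 1) * real (s choose (s div 2))
               * (\<Prod>k\<in>{0..s div 2}. real N - real k) / real N powr (\<alpha> * real s)
             \<le> Bmom N \<rho> \<alpha> l1 l2"
        unfolding lhs B sig using lowS rs by (rule mult_left_mono)
      have "Bmom N \<rho> \<alpha> l1 l2 \<le> \<rho>^s / K * (real (C * D) + mom (2*n) * (n^(2*n) * N^n))"
        unfolding B sig using upS rs by (rule mult_left_mono)
      also have "\<dots> \<le> \<rho>^s / K * (real C * real N ^ (n+1) + mom (2*n) * (real n^(2*n) * real N^n))"
      proof (rule mult_left_mono[OF _ rs])
        have "real C * real D \<le> real C * real N ^ (n+1)" using DN by (intro mult_left_mono) auto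
        then show "real (C * D) + mom (2*n) * (n^(2*n) * N^n) \<le> real C * real N ^ (n+1) + mom (2*n) * (real n^(2*n) * real N^n)"
          by simp
      qed
      finally show "Bmom N \<rho> \<alpha> l1 l2
             \<le> \<rho> ^ s / (real (s div 2) + 1) * real (s choose (s div 2))
                 * real N powr (real s * (1/2 - \<alpha>) + 1)
               + \<rho> ^ s * gauss_moment s * (real s / 2) ^ s * real N powr (real s * (1/2 - \<alpha>))"
        unfolding rhs .
    qed
  qed
  show ?thesis using part1 part2 by (simp add: s_def Let_def)
qed


end
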